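(* Let $\mathcal{I}$ be an ideal on $\omega$ such that $\mathrm{fin}\subseteq\mathcal{I}$. Then there exist $A, C \in [\omega]^\omega$ such that $A = \omega\setminus C$ and $\mathcal{I}|A$ is isomorphic to $\mathcal{I}$.
   Context: $\mathrm{fin}$ is the ideal of finite subsets of $\omega$. For $A\subseteq\omega$, $\mathcal{I}|A = \{I \subseteq A : I\in\mathcal{I}\}$, an ideal on $A$. Ideals $\mathcal{I}$ on $\Omega$ and $\mathcal{J}$ on $\Omega'$ are isomorphic if there is a bijection $f:\Omega\to\Omega'$ such that for every $B\subseteq\Omega'$, $B\in\mathcal{J}$ iff $f^{-1}(B)\in\mathcal{I}$. *)

theory Defs
  imports Main
begin

definition is_ideal :: "'a set set \<Rightarrow> 'a set \<Rightarrow> bool" where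
  "is_ideal \<I> \<Omega> \<longleftrightarrow>
     \<I> \<subseteq> Pow \<Omega> \<and> {} \<in> \<I> \<and>
     (\<forall>X Y. X \<in> \<I> \<longrightarrow> Y \<subseteq> X \<longrightarrow> Y \<in> \<I>) \<and>
     (\<forall>X Y. X \<in> \<I> \<longrightarrow> Y \<in> \<I> \<longrightarrow> X \<union> Y \<in> \<I>) \<and>
     \<Omega> \<notin> \<I>"

definition fin :: "nat set set" where
  "fin = {X. finite X}"

definition ideal_restr :: "'a set set \<Rightarrow> 'a set \<Rightarrow> 'a set set" where
  "ideal_restr \<I> A = {I. I \<subseteq> A \<and> I \<in> \<I>}"

definition ideals_isomorphic :: "'a set set \<Rightarrow> 'a set \<Rightarrow> 'b set set \<Rightarrow> 'b set \<Rightarrow> bool" where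
  "ideals_isomorphic \<I> \<Omega> \<J> \<Omega>' \<longleftrightarrow>
     (\<exists>f. bij_betw f \<Omega> \<Omega>' \<and> (\<forall>B. B \<subseteq> \<Omega>' \<longrightarrow> (B \<in> \<J> \<longleftrightarrow> f -` B \<inter> \<Omega> \<in> \<I>)))"

end

theory Submission
  imports Defs "HOL-Library.Countable_Set"
begin

lemma inf_odd: "infinite {n::nat. odd n}"
  unfolding infinite_nat_iff_unbounded_le
proof
  fix m :: nat
  show "\<exists>n\<ge>m. n \<in> {n. odd n}" by (rule exI[of _ "2*m+1"]) simp
qed

lemma inf_even: "infinite {n::nat. even n}"
  unfolding infinite_nat_iff_unbounded_le
proof
  fix m :: nat
  show "\<exists>n\<ge>m. n \<in> {n. even n}" by (rule exI[of _ "2*m"]) simp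
qed

lemma case_inf:
  fixes \<I> :: "nat set set" and C0 :: "nat set" and h :: "nat \<Rightarrow> nat"
  assumes id: "is_ideal \<I> (UNIV :: nat set)"
    and C0: "C0 \<in> \<I>" and hb: "bij_betw h UNIV C0"
  shows "\<exists>A C. infinite A \<and> infinite C \<and> A = UNIV - C \<and>
           ideals_isomorphic (ideal_restr \<I> A) A \<I> (UNIV :: nat set)"
proof -
  have hinj: "inj h" and himg: "h ` UNIV = C0" using hb by (auto simp: bij_betw_def)
  have sub: "\<And>X Y. X \<in> \<I> \<Longrightarrow> Y \<subseteq> X \<Longrightarrow> Y \<in> \<I>"
    and un: "\<And>X Y. X \<in> \<I> \<Longrightarrow> Y \<in> \<I> \<Longrightarrow> X \<union> Y \<in> \<I>"
    using id unfolding is_ideal_def by blast+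
  have key: "\<And>X. X \<in> \<I> \<longleftrightarrow> X - C0 \<in> \<I>"
  proof
    fix X assume "X \<in> \<I>" thus "X - C0 \<in> \<I>" using sub by blast
  next
    fix X assume "X - C0 \<in> \<I>"
    hence "(X - C0) \<union> C0 \<in> \<I>" using un C0 by blast
    thus "X \<in> \<I>" using sub by blast
  qed
  define C where "C = h ` {n. odd n}"
  define A where "A = UNIV - C"
  define f where "f x = (if x \<in> C0 then h (inv h x div 2) else x)" for x
  have infC: "infinite C"
    unfolding C_def using hinj
    by (metis finite_imageD infinite_UNIV_nat inf_odd inj_on_subset top_greatest)
  have evA: "h (2*k) \<in> A" for k
    unfolding A_def C_def using hinj by (auto dest: injD)
  have infA: "infinite A"
  proof
    assume "finite A"
    hence "finite (h ` range (\<lambda>k. 2*k))" using evA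
      by (metis (no_types, lifting) finite_subset image_subset_iff rangeE)
    hence "finite (range (\<lambda>k::nat. 2*k))" using hinj
      by (meson finite_imageD inj_on_subset top_greatest)
    moreover have "inj (\<lambda>k::nat. 2*k)" by (auto simp: inj_on_def)
    ultimately show False by (simp add: finite_image_iff)
  qed
  have fh: "f (h (2*k)) = h k" for k
    unfolding f_def using himg hinj by auto
  have AC0: "x \<in> A \<Longrightarrow> x \<in> C0 \<Longrightarrow> \<exists>k. x = h (2*k)" for x
  proof -
    assume "x \<in> A" "x \<in> C0"
    then obtain n where n: "x = h n" using himg by auto
    with \<open>x \<in> A\<close> have "\<not> odd n" unfolding A_def C_def by auto
    thus ?thesis using n by (metis evenE)
  qed
  have bij: "bij_betw f A UNIV"
  proof (rule bij_betw_imageI)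
    show "inj_on f A"
    proof (rule inj_onI)
      fix x y assume x: "x \<in> A" and y: "y \<in> A" and e: "f x = f y"
      show "x = y"
      proof (cases "x \<in> C0"; cases "y \<in> C0")
        assume "x \<in> C0" "y \<in> C0"
        then obtain a b where "x = h (2*a)" "y = h (2*b)" using AC0 x y by blast
        thus ?thesis using e fh hinj by (metis injD)
      next
        assume "x \<in> C0" "y \<notin> C0"
        then obtain a where "x = h (2*a)" using AC0 x by blast
        thus ?thesis using e fh \<open>y \<notin> C0\<close> himg f_def by auto
      next
        assume "x \<notin> C0" "y \<in> C0"
        then obtain a where "y = h (2*a)" using AC0 y by blast
        thus ?thesis using e fh \<open>x \<notin> C0\<close> himg f_def by auto
      next
        assume "x \<notin> C0" "y \<notin> C0"
        thus ?thesis using e f_def by auto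
      qed
    qed
    show "f ` A = UNIV"
    proof (rule set_eqI, rule iffI)
      fix y :: nat assume "y \<in> UNIV"
      show "y \<in> f ` A"
      proof (cases "y \<in> C0")
        case True
        then obtain k where "y = h k" using himg by auto
        thus ?thesis using fh evA by (metis image_eqI)
      next
        case False
        hence "y \<notin> C" unfolding C_def using himg by auto
        hence "y \<in> A" unfolding A_def by auto
        moreover have "f y = y" using False f_def by auto
        ultimately show ?thesis by (metis image_eqI)
      qed
    qed simp
  qed
  have iso: "ideals_isomorphic (ideal_restr \<I> A) A \<I> UNIV"
    unfolding ideals_isomorphic_def
  proof (intro exI conjI allI impI)
    show "bij_betw f A UNIV" by (rule bij)
    fix B :: "nat set"
    have AC: "UNIV - C0 \<subseteq> A" unfolding A_def C_def using himg by auto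
    have "(f -` B \<inter> A) - C0 = B - C0"
      using AC unfolding f_def by auto
    hence "B \<in> \<I> \<longleftrightarrow> f -` B \<inter> A \<in> \<I>" using key by metis
    thus "B \<in> \<I> \<longleftrightarrow> f -` B \<inter> A \<in> ideal_restr \<I> A"
      unfolding ideal_restr_def by auto
  qed
  show ?thesis using infA infC iso A_def by blast
qed

lemma case_fin:
  fixes \<I> :: "nat set set"
  assumes "\<I> = fin"
  shows "\<exists>A C. infinite A \<and> infinite C \<and> A = UNIV - C \<and>
           ideals_isomorphic (ideal_restr \<I> A) A \<I> (UNIV :: nat set)"
proof -
  define C :: "nat set" where "C = {n. odd n}"
  define A :: "nat set" where "A = UNIV - C"
  have Aev: "A = {n. even n}" unfolding A_def C_def by auto
  have bij: "bij_betw (\<lambda>n. n div 2) A UNIV"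
  proof (rule bij_betw_imageI)
    show "inj_on (\<lambda>n::nat. n div 2) A" unfolding Aev inj_on_def
      by (auto elim!: evenE)
    show "(\<lambda>n::nat. n div 2) ` A = UNIV" unfolding Aev
    proof (rule set_eqI, rule iffI)
      fix y :: nat
      show "y \<in> (\<lambda>n. n div 2) ` {n. even n}"
        by (rule image_eqI[of _ _ "2*y"]) auto
    qed simp
  qed
  have iso: "ideals_isomorphic (ideal_restr \<I> A) A \<I> UNIV"
    unfolding ideals_isomorphic_def
  proof (intro exI conjI allI impI)
    show "bij_betw (\<lambda>n. n div 2) A UNIV" by (rule bij)
    fix B :: "nat set"
    have "(\<lambda>n. n div 2) ` ((\<lambda>n. n div 2) -` B \<inter> A) = B"
    proof (rule set_eqI, rule iffI)
      fix x assume "x \<in> B"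
      have "2*x \<in> A" unfolding Aev by simp
      moreover have "(2*x) div 2 = x" by simp
      ultimately show "x \<in> (\<lambda>n. n div 2) ` ((\<lambda>n. n div 2) -` B \<inter> A)"
        using \<open>x \<in> B\<close> by (metis IntI image_eqI vimageI)
    qed auto
    moreover have "inj_on (\<lambda>n::nat. n div 2) ((\<lambda>n. n div 2) -` B \<inter> A)"
      using bij by (auto simp: bij_betw_def inj_on_def)
    ultimately have "finite B \<longleftrightarrow> finite ((\<lambda>n::nat. n div 2) -` B \<inter> A)"
      by (metis finite_image_iff)
    thus "B \<in> \<I> \<longleftrightarrow> (\<lambda>n. n div 2) -` B \<inter> A \<in> ideal_restr \<I> A"
      unfolding assms ideal_restr_def fin_def by auto
  qed
  have infC: "infinite C" unfolding C_def using inf_odd by simp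
  have infA: "infinite A" unfolding Aev using inf_even by simp
  show ?thesis using infA infC iso A_def by blast
qed

theorem lemma6p1:
  fixes \<I> :: "nat set set"
  assumes "is_ideal \<I> (UNIV :: nat set)"
    and "fin \<subseteq> \<I>"
  shows "\<exists>A C. infinite A \<and> infinite C \<and> A = UNIV - C \<and>
           ideals_isomorphic (ideal_restr \<I> A) A \<I> (UNIV :: nat set)"
proof (cases "\<exists>C0\<in>\<I>. infinite C0")
  case True
  then obtain C0 where "C0 \<in> \<I>" "infinite C0" by blast
  moreover have "bij_betw (from_nat_into C0) UNIV C0"
    using \<open>infinite C0\<close> by (simp add: bij_betw_from_nat_into)
  ultimately show ?thesis using case_inf assms(1) by blast
next
  case False
  hence "\<I> = fin" using assms(2) unfolding fin_def by auto
  thus ?thesis by (rule case_fin)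
qed

end
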